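(* Let $\rho \in \mathcal{S}$ and let $\sigma \in \mathcal{P}$ be non-zero. Then \[ D^{\mathbb{P}}(\rho\|\sigma)=\sup_{\omega > 0}\Big(\operatorname{tr}[\rho \log \omega] - \log \operatorname{tr}[\sigma \omega]\Big)=\sup_{\omega > 0}\Big( \operatorname{tr}[\rho \log \omega]+1-\operatorname{tr}[\sigma \omega]\Big), \] where the suprema are over positive definite operators $\omega$ on the $d$-dimensional Hilbert space (all three quantities equal $+\infty$ when the support of $\rho$ is not contained in the support of $\sigma$). Moreover, if $\rho>0$ and $\sigma>0$ (positive definite), both suprema are attained.
   Context: Work on a $d$-dimensional complex Hilbert space ($d\in\mathbb{N}$). $\mathcal{P}$ denotes the set of positive semidefinite operators and $\mathcal{S}\subset\mathcal{P}$ the density operators (unit trace). $\log$ is the natural logarithm. The projectively measured relative entropy is \[ D^{\mathbb{P}}(\rho\|\sigma) := \sup_{ \{ P_i \}_{i=1}^d} \sum_{i=1}^d \operatorname{tr} [P_i \rho] \log \frac{\operatorname{tr} [P_i \rho]}{\operatorname{tr} [P_i \sigma]}, \] the supremum over all families of $d$ mutually orthogonal (rank-one) projectors, with conventions $0\log\frac{0}{q}=0$ and $p\log\frac{p}{0}=+\infty$ for $p>0$. *)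

theory Defs
  imports "HOL-Analysis.Analysis"
begin

text \<open>Operators on a d-dimensional complex Hilbert space are complex d x d matrices,
  indexed by a finite type 'n with d = CARD('n).  The trace is the library's trace.\<close>

definition cadj :: "complex^'n^'n \<Rightarrow> complex^'n^'n" where
  "cadj A = (\<chi> i j. cnj (A $ j $ i))"

definition hermitian_op :: "complex^'n^'n \<Rightarrow> bool" where
  "hermitian_op A \<longleftrightarrow> cadj A = A"

definition qform :: "complex^'n^'n \<Rightarrow> complex^'n \<Rightarrow> complex" where
  "qform A x = (\<Sum>i\<in>UNIV. \<Sum>j\<in>UNIV. cnj (x $ i) * A $ i $ j * x $ j)"

definition psd_op :: "complex^'n^'n \<Rightarrow> bool" where
  "psd_op A \<longleftrightarrow> hermitian_op A \<and> (\<forall>x. 0 \<le> Re (qform A x))"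

definition pd_op :: "complex^'n^'n \<Rightarrow> bool" where
  "pd_op A \<longleftrightarrow> hermitian_op A \<and> (\<forall>x. x \<noteq> 0 \<longrightarrow> 0 < Re (qform A x))"

definition density_op :: "complex^'n^'n \<Rightarrow> bool" where
  "density_op A \<longleftrightarrow> psd_op A \<and> trace A = 1"

definition unitary_op :: "complex^'n^'n \<Rightarrow> bool" where
  "unitary_op U \<longleftrightarrow> U ** cadj U = mat 1 \<and> cadj U ** U = mat 1"

definition cdiag :: "('n \<Rightarrow> real) \<Rightarrow> complex^'n^'n" where
  "cdiag l = (\<chi> i j. if i = j then complex_of_real (l i) else 0)"

definition op_log :: "complex^'n^'n \<Rightarrow> complex^'n^'n" where
  "op_log A = (SOME L. \<exists>U l. unitary_op U \<and> (\<forall>i. 0 < l i) \<and>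
      A = U ** cdiag l ** cadj U \<and> L = U ** cdiag (\<lambda>i. ln (l i)) ** cadj U)"

definition rank_one_proj :: "complex^'n^'n \<Rightarrow> bool" where
  "rank_one_proj P \<longleftrightarrow> (\<exists>v::complex^'n. (\<Sum>i\<in>UNIV. cnj (v $ i) * v $ i) = 1 \<and>
      P = (\<chi> i j. v $ i * cnj (v $ j)))"

definition proj_meas :: "('n \<Rightarrow> complex^'n^'n) \<Rightarrow> bool" where
  "proj_meas P \<longleftrightarrow> (\<forall>i. rank_one_proj (P i)) \<and> (\<forall>i j. i \<noteq> j \<longrightarrow> P i ** P j = 0)"

text \<open>p log(p/q) with conventions 0 log(0/q) = 0 and p log(p/0) = +infinity for p > 0\<close>
definition rel_term :: "real \<Rightarrow> real \<Rightarrow> ereal" where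
  "rel_term p q = (if p = 0 then 0 else if q = 0 then \<infinity> else ereal (p * ln (p / q)))"

definition proj_meas_rel_ent :: "complex^'n^'n \<Rightarrow> complex^'n^'n \<Rightarrow> ereal" where
  "proj_meas_rel_ent \<rho> \<sigma> = (SUP P\<in>{P. proj_meas P}.
      (\<Sum>i\<in>UNIV. rel_term (Re (trace (P i ** \<rho>))) (Re (trace (P i ** \<sigma>)))))"

definition op_support :: "complex^'n^'n \<Rightarrow> (complex^'n) set" where
  "op_support A = range (\<lambda>x. A *v x)"

end

theory Submission
  imports Defs
begin

definition cinner :: "complex^'n \<Rightarrow> complex^'n \<Rightarrow> complex" where
  "cinner x y = (\<Sum>i\<in>UNIV. cnj (x $ i) * y $ i)"

lemma cinner_add_right: "cinner x (y + z) = cinner x y + cinner x z"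
  by (simp add: cinner_def distrib_left sum.distrib)
lemma cinner_add_left: "cinner (x + y) z = cinner x z + cinner y z"
  by (simp add: cinner_def distrib_right sum.distrib)
lemma cinner_diff_right: "cinner x (y - z) = cinner x y - cinner x z"
  by (simp add: cinner_def right_diff_distrib sum_subtractf)
lemma cinner_scale_right: "cinner x (c *s y) = c * cinner x y"
  by (simp add: cinner_def sum_distrib_left algebra_simps)
lemma cinner_scale_left: "cinner (c *s x) y = cnj c * cinner x y"
  by (simp add: cinner_def sum_distrib_left algebra_simps)
lemma cinner_zero_right[simp]: "cinner x 0 = 0" by (simp add: cinner_def)
lemma cinner_zero_left[simp]: "cinner 0 x = 0" by (simp add: cinner_def)
lemma cinner_cnj: "cnj (cinner x y) = cinner y x"
  by (simp add: cinner_def mult.commute)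

lemma cnj_norm_sq: "complex_of_real ((norm z)^2) = cnj z * z"
  by (metis complex_norm_square mult.commute of_real_power)

lemma cinner_self: "cinner x x = complex_of_real ((norm x)^2)"
proof -
  have "(norm x)^2 = (\<Sum>i\<in>UNIV. (norm (x$i))^2)"
    by (simp add: norm_vec_def L2_set_def sum_nonneg)
  then have "complex_of_real ((norm x)^2) = (\<Sum>i\<in>UNIV. complex_of_real ((norm (x$i))^2))"
    by (simp add: sum_nonneg)
  also have "\<dots> = cinner x x" unfolding cinner_def
    by (rule sum.cong, rule refl, rule cnj_norm_sq)
  finally show ?thesis by simp
qed

lemma cinner_self_eq0: "cinner x x = 0 \<longleftrightarrow> x = 0"
  by (simp add: cinner_self)

lemma Re_cinner: "Re (cinner x y) = inner x y"
  by (simp add: cinner_def inner_vec_def inner_complex_def)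

lemma cinner_mat: "cinner x (A *v y) = cinner (cadj A *v x) y"
proof -
  have "cinner x (A *v y) = (\<Sum>i\<in>UNIV. \<Sum>k\<in>UNIV. cnj (x$i) * A$i$k * y$k)"
    by (simp add: cinner_def matrix_vector_mult_def sum_distrib_left mult.assoc)
  also have "\<dots> = (\<Sum>k\<in>UNIV. \<Sum>i\<in>UNIV. cnj (x$i) * A$i$k * y$k)"
    by (rule sum.swap)
  also have "\<dots> = cinner (cadj A *v x) y"
    by (simp add: cinner_def matrix_vector_mult_def cadj_def sum_distrib_left sum_distrib_right mult.commute mult.left_commute)
  finally show ?thesis .
qed

lemma cinner_herm: "hermitian_op A \<Longrightarrow> cinner x (A *v y) = cinner (A *v x) y"
  by (simp add: cinner_mat hermitian_op_def)

lemma qform_cinner: "qform A x = cinner x (A *v x)"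
  by (simp add: qform_def cinner_def matrix_vector_mult_def sum_distrib_left mult.assoc)

lemma cadj_cadj[simp]: "cadj (cadj A) = A"
  by (simp add: cadj_def vec_eq_iff)

lemma cadj_mult: "cadj (A ** B) = cadj B ** cadj A"
  by (simp add: cadj_def vec_eq_iff matrix_matrix_mult_def mult.commute)

lemma cadj_cdiag[simp]: "cadj (cdiag l) = cdiag l"
  by (simp add: cadj_def cdiag_def vec_eq_iff)

lemma cadj_mat1[simp]: "cadj (mat 1) = mat 1"
  by (simp add: cadj_def mat_def vec_eq_iff)

lemma cdiag_one: "cdiag (\<lambda>i. 1) = mat 1"
  by (simp add: cdiag_def mat_def vec_eq_iff)

lemma mult_cdiag_right: "(A ** cdiag l) $ i $ j = A $ i $ j * complex_of_real (l j)"
  by (simp add: matrix_matrix_mult_def cdiag_def if_distrib cong: if_cong)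

lemma mult_cdiag_left: "(cdiag l ** A) $ i $ j = complex_of_real (l i) * A $ i $ j"
proof -
  have "(cdiag l ** A) $ i $ j = (\<Sum>k\<in>UNIV. (if i = k then complex_of_real (l i) * A $ k $ j else 0))"
    unfolding matrix_matrix_mult_def cdiag_def vec_lambda_beta by (rule sum.cong) auto
  then show ?thesis by simp
qed

lemma udu_entry: "(U ** cdiag l ** cadj U) $ a $ b = (\<Sum>j\<in>UNIV. U$a$j * complex_of_real (l j) * cnj (U$b$j))"
  unfolding matrix_matrix_mult_def[of "U ** cdiag l" "cadj U"]
  by (simp add: mult_cdiag_right cadj_def)

lemma unitary_cols:
  fixes U :: "complex^'n^'n"
  assumes "unitary_op U"
  shows "cinner (column i U) (column j U) = (if i = j then 1 else 0)"
proof -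
  have "(cadj U ** U) $ i $ j = (mat 1 :: complex^'n^'n) $ i $ j"
    using assms unfolding unitary_op_def by simp
  then show ?thesis
    by (simp add: matrix_matrix_mult_def cadj_def cinner_def column_def mat_def)
qed

lemma unitary_from_cols:
  fixes U :: "complex^'n^'n"
  assumes "\<And>i j. cinner (column i U) (column j U) = (if i = j then 1 else 0)"
  shows "unitary_op U"
proof -
  have 1: "cadj U ** U = mat 1"
    using assms by (simp add: vec_eq_iff matrix_matrix_mult_def cadj_def cinner_def column_def mat_def)
  then have "U ** cadj U = mat 1" using matrix_left_right_inverse by blast
  with 1 show ?thesis unfolding unitary_op_def by simp
qed

lemma unitary_mat1: "unitary_op (mat 1 :: complex^'n^'n)"
  by (simp add: unitary_op_def)

lemma unitary_cadj: "unitary_op U \<Longrightarrow> unitary_op (cadj U)"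
  by (simp add: unitary_op_def)

lemma unitary_vec1: "unitary_op U \<Longrightarrow> U *v (cadj U *v x) = x"
  by (simp add: unitary_op_def matrix_vector_mul_assoc)
lemma unitary_vec2: "unitary_op U \<Longrightarrow> cadj U *v (U *v x) = x"
  by (simp add: unitary_op_def matrix_vector_mul_assoc)

lemma cdiag_vec: "cdiag l *v y = (\<chi> j. complex_of_real (l j) * y $ j)"
proof -
  have "\<And>j. (\<Sum>k\<in>UNIV. cdiag l $ j $ k * y $ k) = (\<Sum>k\<in>UNIV. if j = k then complex_of_real (l j) * y $ k else 0)"
    unfolding cdiag_def vec_lambda_beta by (rule sum.cong) auto
  then show ?thesis by (simp add: vec_eq_iff matrix_vector_mult_def)
qed

lemma cinner_cdiag: "cinner y (cdiag l *v y) = complex_of_real (\<Sum>j\<in>UNIV. l j * (norm (y $ j))^2)"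
proof -
  have "cinner y (cdiag l *v y) = (\<Sum>j\<in>UNIV. complex_of_real (l j * (norm (y $ j))^2))"
    unfolding cdiag_vec cinner_def
    by (rule sum.cong) (auto simp: complex_norm_square mult.commute mult.left_commute simp del: of_real_power)
  then show ?thesis by simp
qed

lemma herm_udu: "hermitian_op (U ** cdiag l ** cadj U)"
  by (simp add: hermitian_op_def cadj_mult matrix_mul_assoc)

lemma pd_udu:
  fixes U :: "complex^'n^'n"
  assumes U: "unitary_op U" and l: "\<And>j. 0 < l j"
  shows "pd_op (U ** cdiag l ** cadj U)"
  unfolding pd_op_def
proof (intro conjI allI impI herm_udu)
  fix x :: "complex^'n" assume x: "x \<noteq> 0"
  define y where "y = cadj U *v x"
  have "y \<noteq> 0" using x unitary_vec1[OF U, of x] unfolding y_def by auto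
  then obtain j where j: "y $ j \<noteq> 0" by (auto simp: vec_eq_iff)
  have "qform (U ** cdiag l ** cadj U) x = cinner y (cdiag l *v y)"
    unfolding qform_cinner y_def
    by (simp add: cinner_mat matrix_vector_mul_assoc[symmetric])
  also have "\<dots> = complex_of_real (\<Sum>j\<in>UNIV. l j * (norm (y $ j))^2)" by (rule cinner_cdiag)
  finally have e: "Re (qform (U ** cdiag l ** cadj U) x) = (\<Sum>j\<in>UNIV. l j * (norm (y $ j))^2)" by simp
  have "0 < (\<Sum>j\<in>UNIV. l j * (norm (y $ j))^2)"
  proof (rule sum_pos2[where i=j])
    show "0 < l j * (norm (y $ j))^2" using l[of j] j by simp
  qed (auto intro: mult_nonneg_nonneg less_imp_le[OF l])
  with e show "0 < Re (qform (U ** cdiag l ** cadj U) x)" by simp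
qed

definition projv :: "complex^'n \<Rightarrow> complex^'n^'n" where
  "projv v = (\<chi> a b. v $ a * cnj (v $ b))"

lemma trace_projv: "trace (projv v ** R) = qform R v"
proof -
  have "trace (projv v ** R) = (\<Sum>a\<in>UNIV. \<Sum>k\<in>UNIV. cnj (v$k) * R$k$a * v$a)"
    by (simp add: trace_def projv_def matrix_matrix_mult_def mult.commute mult.left_commute)
  also have "\<dots> = (\<Sum>k\<in>UNIV. \<Sum>a\<in>UNIV. cnj (v$k) * R$k$a * v$a)" by (rule sum.swap)
  also have "\<dots> = qform R v" by (simp add: qform_def)
  finally show ?thesis .
qed

lemma trace_udu: "trace (R ** (U ** cdiag l ** cadj U)) =
   (\<Sum>j\<in>UNIV. complex_of_real (l j) * qform R (column j U))"
proof -
  have "trace (R ** (U ** cdiag l ** cadj U)) =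
     (\<Sum>a\<in>UNIV. \<Sum>b\<in>UNIV. \<Sum>j\<in>UNIV. complex_of_real (l j) * (cnj (U$a$j) * R$a$b * U$b$j))"
    by (simp add: trace_def matrix_matrix_mult_def[of R] udu_entry sum_distrib_left mult.commute mult.left_commute)
  also have "\<dots> = (\<Sum>a\<in>UNIV. \<Sum>j\<in>UNIV. \<Sum>b\<in>UNIV. complex_of_real (l j) * (cnj (U$a$j) * R$a$b * U$b$j))"
    by (rule sum.cong[OF refl], rule sum.swap)
  also have "\<dots> = (\<Sum>j\<in>UNIV. \<Sum>a\<in>UNIV. \<Sum>b\<in>UNIV. complex_of_real (l j) * (cnj (U$a$j) * R$a$b * U$b$j))"
    by (rule sum.swap)
  also have "\<dots> = (\<Sum>j\<in>UNIV. complex_of_real (l j) * qform R (column j U))"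
    by (simp add: qform_def column_def sum_distrib_left)
  finally show ?thesis .
qed

lemma udu_unique_fun:
  fixes U V :: "complex^'n^'n"
  assumes U: "unitary_op U" and V: "unitary_op V"
    and eq: "U ** cdiag l ** cadj U = V ** cdiag m ** cadj V"
  shows "U ** cdiag (\<lambda>i. f (l i)) ** cadj U = V ** cdiag (\<lambda>i. f (m i)) ** cadj V"
proof -
  define B where "B = cadj V ** U"
  have UU: "cadj U ** U = mat 1" "U ** cadj U = mat 1" using U by (auto simp: unitary_op_def)
  have VV: "cadj V ** V = mat 1" "V ** cadj V = mat 1" using V by (auto simp: unitary_op_def)
  have "cadj V ** (U ** cdiag l ** cadj U) ** U = cadj V ** (V ** cdiag m ** cadj V) ** U"
    using eq by simp
  then have BD: "B ** cdiag l = cdiag m ** B"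
    unfolding B_def by (simp add: matrix_mul_assoc UU VV)
       (metis UU(1) VV(1) matrix_mul_assoc matrix_mul_lid matrix_mul_rid)
  have BDf: "B ** cdiag (\<lambda>i. f (l i)) = cdiag (\<lambda>i. f (m i)) ** B"
  proof -
    have "B $ i $ j * complex_of_real (f (l j)) = complex_of_real (f (m i)) * B $ i $ j" for i j
    proof -
      have "B $ i $ j * complex_of_real (l j) = complex_of_real (m i) * B $ i $ j"
        using arg_cong[OF BD, of "\<lambda>M. M $ i $ j"] by (simp add: mult_cdiag_right mult_cdiag_left)
      then have "B $ i $ j = 0 \<or> l j = m i" by (auto simp: mult.commute)
      then show ?thesis by auto
    qed
    then show ?thesis by (simp add: vec_eq_iff mult_cdiag_right mult_cdiag_left)
  qed
  have "U ** cdiag (\<lambda>i. f (l i)) ** cadj U = (V ** cadj V) ** U ** cdiag (\<lambda>i. f (l i)) ** cadj U"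
    by (simp add: VV)
  also have "\<dots> = V ** (B ** cdiag (\<lambda>i. f (l i))) ** cadj U"
    unfolding B_def by (simp add: matrix_mul_assoc)
  also have "\<dots> = V ** cdiag (\<lambda>i. f (m i)) ** (B ** cadj U)"
    unfolding BDf by (simp add: matrix_mul_assoc)
  also have "B ** cadj U = cadj V"
    unfolding B_def by (simp add: UU flip: matrix_mul_assoc)
  finally show ?thesis .
qed

lemma op_log_udu:
  fixes U :: "complex^'n^'n"
  assumes U: "unitary_op U" and l: "\<And>i. 0 < l i"
  shows "op_log (U ** cdiag l ** cadj U) = U ** cdiag (\<lambda>i. ln (l i)) ** cadj U"
proof -
  let ?A = "U ** cdiag l ** cadj U"
  let ?P = "\<lambda>L. \<exists>U l. unitary_op U \<and> (\<forall>i. 0 < l i) \<and>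
      ?A = U ** cdiag l ** cadj U \<and> L = U ** cdiag (\<lambda>i. ln (l i)) ** cadj U"
  have "\<exists>L. ?P L" using U l by blast
  then have "?P (op_log ?A)" unfolding op_log_def by (rule someI_ex)
  then obtain V m where V: "unitary_op V" and eq: "?A = V ** cdiag m ** cadj V"
    and L: "op_log ?A = V ** cdiag (\<lambda>i. ln (m i)) ** cadj V" by blast
  show ?thesis unfolding L using udu_unique_fun[OF U V eq, of ln] by simp
qed

lemma quad_zero:
  fixes c K :: real
  assumes "\<And>t. 2 * t * c \<le> t^2 * K"
  shows "c = 0"
proof -
  define s where "s = \<bar>K\<bar> + 1"
  define t where "t = c / s"
  have pos: "s > 0" by (simp add: s_def)
  have "2 * t * c \<le> t^2 * K" by (rule assms)
  then have "(2 * t * c) * s^2 \<le> (t^2 * K) * s^2" by (rule mult_right_mono) simp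
  moreover have "(2 * t * c) * s^2 = 2 * c^2 * s" using pos by (simp add: t_def field_simps power2_eq_square)
  moreover have "(t^2 * K) * s^2 = c^2 * K" using pos by (simp add: t_def field_simps power2_eq_square)
  ultimately have "2 * c^2 * s \<le> c^2 * K" by simp
  also have "\<dots> \<le> c^2 * \<bar>K\<bar>" by (simp add: mult_left_mono)
  finally have "c^2 * (\<bar>K\<bar> + 2) \<le> 0" by (simp add: s_def algebra_simps power2_eq_square)
  moreover have "\<bar>K\<bar> + 2 > 0" by simp
  ultimately have "c^2 \<le> 0" by (simp add: mult_le_0_iff)
  then show ?thesis by simp
qed

lemma cinner_ii_left: "Re (cinner (\<i> *s x) y) = Im (cinner x y)"
  by (simp add: cinner_scale_left)

lemma cinner_zero_iff_re: "cinner x y = 0 \<longleftrightarrow> Re (cinner x y) = 0 \<and> Re (cinner (\<i> *s x) y) = 0"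
  by (simp add: cinner_ii_left complex_eq_iff)

lemma mv_scale: fixes A :: "complex^'n^'m"
  shows "A *v (c *s x) = c *s (A *v x)"
  by (simp add: matrix_vector_mult_def vec_eq_iff sum_distrib_left mult_ac)

lemma mv_add: fixes A :: "complex^'n^'m"
  shows "A *v (x + y) = A *v x + A *v y"
  by (simp add: matrix_vector_mult_def vec_eq_iff sum.distrib distrib_left)

lemma mv_diff: fixes A :: "complex^'n^'m"
  shows "A *v (x - y) = A *v x - A *v y"
  by (simp add: matrix_vector_mult_def vec_eq_iff sum_subtractf[symmetric] right_diff_distrib)

lemma cont_cinner: "continuous_on S (\<lambda>x. cinner v x)"
  unfolding cinner_def by (intro continuous_intros)

lemma cont_qform: "continuous_on S (\<lambda>x. Re (qform A x))"
  unfolding qform_def by (intro continuous_intros)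

lemma exists_orth_nonzero:
  fixes F :: "(complex^'n) set"
  assumes fin: "finite F" and card: "card F < CARD('n)"
  shows "\<exists>x. x \<noteq> 0 \<and> (\<forall>v\<in>F. cinner v x = 0)"
proof -
  define S where "S = F \<union> (\<lambda>v. \<i> *s v) ` F"
  have "finite S" using fin by (simp add: S_def)
  have "card S \<le> card F + card ((\<lambda>v. \<i> *s v) ` F)" unfolding S_def by (rule card_Un_le)
  also have "\<dots> \<le> 2 * card F" using card_image_le[OF fin, of "\<lambda>v. \<i> *s v"] by simp
  finally have "card S < DIM(complex^'n)" using card by simp
  then have "dim S < DIM(complex^'n)" using dim_le_card'[OF \<open>finite S\<close>] by linarith
  then obtain x :: "complex^'n" where x: "x \<noteq> 0" "\<And>y. y \<in> span S \<Longrightarrow> orthogonal x y"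
    using orthogonal_to_subspace_exists[of S] by blast
  have "cinner v x = 0" if "v \<in> F" for v
  proof -
    have "v \<in> span S" "\<i> *s v \<in> span S" using that by (auto simp: S_def intro: span_base)
    then have "x \<bullet> v = 0" "x \<bullet> (\<i> *s v) = 0" using x(2) by (auto simp: orthogonal_def)
    then show ?thesis unfolding cinner_zero_iff_re Re_cinner by (simp add: inner_commute)
  qed
  with x show ?thesis by blast
qed

lemma cinner_ofreal_left: "cinner (complex_of_real t *s x) y = complex_of_real t * cinner x y"
  by (simp add: cinner_scale_left)

lemma norm_sq_re: "(norm x)^2 = Re (cinner x x)"
  by (simp add: cinner_self)

lemma norm_sq_scale: "(norm (complex_of_real r *s x))^2 = r^2 * (norm x)^2"
  unfolding norm_sq_re by (simp add: cinner_scale_left cinner_scale_right power2_eq_square)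

lemma norm_sq1: "(norm x)^2 = 1 \<Longrightarrow> norm x = 1"
  using power2_eq_1_iff[of "norm x"] norm_ge_zero[of x] by linarith

lemma cinner_expand: "cinner (a + complex_of_real t *s b) (c + complex_of_real t *s d) =
   cinner a c + complex_of_real t * cinner a d + complex_of_real t * cinner b c
   + complex_of_real t * complex_of_real t * cinner b d"
  by (simp add: cinner_add_left cinner_add_right cinner_scale_left cinner_scale_right mult.assoc distrib_left)

lemma Re_cinner_expand: "Re (cinner (a + complex_of_real t *s b) (c + complex_of_real t *s d)) =
   Re (cinner a c) + t * Re (cinner a d) + t * Re (cinner b c) + t * t * Re (cinner b d)"
  unfolding cinner_expand by simp

lemma eigen_step:
  fixes A :: "complex^'n^'n" and F :: "(complex^'n) set"
  assumes herm: "hermitian_op A" and fin: "finite F" and card: "card F < CARD('n)"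
    and eig: "\<forall>v\<in>F. \<exists>c::real. A *v v = complex_of_real c *s v"
  shows "\<exists>x. cinner x x = 1 \<and> (\<forall>v\<in>F. cinner v x = 0) \<and> (\<exists>c::real. A *v x = complex_of_real c *s x)"
proof -
  define W where "W = {x::complex^'n. \<forall>v\<in>F. cinner v x = 0}"
  define K where "K = {x::complex^'n. norm x = 1} \<inter> W"
  define f where "f = (\<lambda>x::complex^'n. Re (qform A x))"
  have W_add: "x + y \<in> W" if "x \<in> W" "y \<in> W" for x y
    using that by (simp add: W_def cinner_add_right)
  have W_scale: "c *s x \<in> W" if "x \<in> W" for x c
    using that by (simp add: W_def cinner_scale_right)
  obtain x1 where x1: "x1 \<noteq> 0" "x1 \<in> W" using exists_orth_nonzero[OF fin card] by (auto simp: W_def)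
  have "complex_of_real (1 / norm x1) *s x1 \<in> K"
  proof -
    have "norm (complex_of_real (1 / norm x1) *s x1) ^ 2 = 1"
      using x1(1) by (subst norm_sq_scale) (simp add: power_divide)
    then show ?thesis using W_scale[OF x1(2)] by (simp add: K_def norm_sq1 del: of_real_divide)
  qed
  then have Kne: "K \<noteq> {}" by blast
  have "compact K"
  unfolding K_def proof (rule compact_Int_closed)
    show "compact {x::complex^'n. norm x = 1}"
      using compact_sphere[of "0::complex^'n" 1] by (simp add: sphere_def)
    have "W = (\<Inter>v\<in>F. {x. cinner v x = 0})" by (auto simp: W_def)
    then show "closed W"
      by (simp add: closed_INT closed_Collect_eq cont_cinner continuous_on_const)
  qed
  then obtain x0 where x0K: "x0 \<in> K" and x0max: "\<And>y. y \<in> K \<Longrightarrow> f y \<le> f x0"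
    using continuous_attains_sup[OF _ Kne, of f] cont_qform unfolding f_def by blast
  define M where "M = f x0"
  have x0W: "x0 \<in> W" and x0n: "norm x0 = 1" using x0K by (auto simp: K_def)
  have x0c: "cinner x0 x0 = 1" using x0n by (simp add: cinner_self)
  have fscale: "f (complex_of_real r *s z) = r^2 * f z" for r z
    by (simp add: f_def qform_cinner mv_scale cinner_scale_left cinner_scale_right power2_eq_square)
  have bound: "f z \<le> M * Re (cinner z z)" if "z \<in> W" for z
  proof (cases "z = 0")
    case True then show ?thesis by (simp add: f_def qform_def)
  next
    case False
    define r where "r = 1 / norm z"
    have rz: "complex_of_real r *s z \<in> K"
    proof -
      have "(norm (complex_of_real r *s z))^2 = 1" using False by (subst norm_sq_scale) (simp add: r_def power_divide)
      then show ?thesis using W_scale[OF that] by (simp add: K_def norm_sq1 del: of_real_divide)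
    qed
    have "r^2 * f z \<le> M" using x0max[OF rz] fscale unfolding M_def by simp
    moreover have "Re (cinner z z) = (norm z)^2" by (simp add: cinner_self)
    moreover have "norm z > 0" using False by simp
    ultimately show ?thesis unfolding r_def by (simp add: field_simps)
  qed
  define w where "w = A *v x0 - complex_of_real M *s x0"
  have wre: "Re (cinner y w) = 0" if yW: "y \<in> W" for y
  proof -
    define c where "c = Re (cinner y w)"
    have "2 * t * c \<le> t^2 * (M * Re (cinner y y) - f y)" for t
    proof -
      define z where "z = x0 + complex_of_real t *s y"
      have "z \<in> W" unfolding z_def by (intro W_add x0W W_scale yW)
      then have b: "f z \<le> M * Re (cinner z z)" by (rule bound)
      have h1: "Re (cinner x0 (A *v y)) = Re (cinner y (A *v x0))"
      proof -
        have "cinner x0 (A *v y) = cnj (cinner y (A *v x0))" by (simp add: cinner_herm[OF herm] cinner_cnj)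
        then show ?thesis by simp
      qed
      have h2: "Re (cinner x0 y) = Re (cinner y x0)"
      proof -
        have "cinner x0 y = cnj (cinner y x0)" by (simp add: cinner_cnj)
        then show ?thesis by simp
      qed
      have fz: "f z = M + 2 * t * Re (cinner y (A *v x0)) + t^2 * f y"
        unfolding z_def f_def qform_cinner M_def mv_add mv_scale Re_cinner_expand h1
        by (simp add: power2_eq_square)
      have nz: "Re (cinner z z) = 1 + 2 * t * Re (cinner y x0) + t^2 * Re (cinner y y)"
        unfolding z_def Re_cinner_expand h2 x0c
        by (simp add: power2_eq_square)
      have "c = Re (cinner y (A *v x0)) - M * Re (cinner y x0)"
        by (simp add: c_def w_def cinner_diff_right cinner_scale_right)
      then have e: "Re (cinner y (A *v x0)) = c + M * Re (cinner y x0)" by simp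
      have "t^2 * (M * Re (cinner y y) - f y) - 2 * t * c = M * Re (cinner z z) - f z"
        unfolding fz nz e by (simp add: algebra_simps power2_eq_square)
      then show ?thesis using b by linarith
    qed
    then have "c = 0" by (rule quad_zero)
    then show ?thesis by (simp add: c_def)
  qed
  have wW: "w \<in> W"
    unfolding W_def
  proof (intro CollectI ballI)
    fix v assume vF: "v \<in> F"
    obtain c :: real where c: "A *v v = complex_of_real c *s v" using eig vF by blast
    have v0: "cinner v x0 = 0" using x0W vF unfolding W_def by blast
    have "cinner v (A *v x0) = cinner (A *v v) x0" by (rule cinner_herm[OF herm])
    also have "\<dots> = 0" unfolding c cinner_scale_left v0 by simp
    finally have "cinner v (A *v x0) = 0" .
    then show "cinner v w = 0" unfolding w_def cinner_diff_right cinner_scale_right v0 by simp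
  qed
  have "cinner w w = 0"
    unfolding cinner_zero_iff_re using wre[OF wW] wre[OF W_scale[OF wW]] by simp
  then have "w = 0" by (simp add: cinner_self_eq0)
  then have "A *v x0 = complex_of_real M *s x0" by (simp add: w_def)
  with x0c x0W show ?thesis unfolding W_def by blast
qed

lemma eigen_family:
  fixes A :: "complex^'n^'n"
  assumes herm: "hermitian_op A"
  shows "k \<le> CARD('n) \<Longrightarrow> \<exists>F. finite F \<and> card F = k \<and> (\<forall>v\<in>F. cinner v v = 1) \<and>
     (\<forall>v\<in>F. \<forall>w\<in>F. v \<noteq> w \<longrightarrow> cinner v w = 0) \<and> (\<forall>v\<in>F. \<exists>c::real. A *v v = complex_of_real c *s v)"
proof (induction k)
  case 0
  show ?case by (rule exI[of _ "{}"]) simp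
next
  case (Suc k)
  then obtain F where F: "finite F" "card F = k" "\<forall>v\<in>F. cinner v v = 1"
     "\<forall>v\<in>F. \<forall>w\<in>F. v \<noteq> w \<longrightarrow> cinner v w = 0" "\<forall>v\<in>F. \<exists>c::real. A *v v = complex_of_real c *s v"
    by auto
  have "card F < CARD('n)" using Suc.prems F(2) by simp
  from eigen_step[OF herm F(1) this F(5)] obtain x where
    x: "cinner x x = 1" "\<forall>v\<in>F. cinner v x = 0" "\<exists>c::real. A *v x = complex_of_real c *s x" by blast
  have xF: "x \<notin> F" using x(1,2) by force
  show ?case
  proof (rule exI[of _ "insert x F"], intro conjI)
    show "finite (insert x F)" using F(1) by simp
    show "card (insert x F) = Suc k" using F(1,2) xF by simp
    show "\<forall>v\<in>insert x F. cinner v v = 1" using F(3) x(1) by simp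
    show "\<forall>v\<in>insert x F. \<forall>w\<in>insert x F. v \<noteq> w \<longrightarrow> cinner v w = 0"
    proof (intro ballI impI)
      fix v w assume v: "v \<in> insert x F" and w: "w \<in> insert x F" and vw: "v \<noteq> w"
      show "cinner v w = 0"
      proof (cases "v = x")
        case True
        then have "w \<in> F" using w vw by auto
        then have "cinner w v = 0" using x(2) True by simp
        then show ?thesis by (metis cinner_cnj complex_cnj_zero)
      next
        case False
        then have vF: "v \<in> F" using v by auto
        show ?thesis
        proof (cases "w = x")
          case True then show ?thesis using x(2) vF by simp
        next
          case False then show ?thesis using F(4) vF w vw by auto
        qed
      qed
    qed
    show "\<forall>v\<in>insert x F. \<exists>c::real. A *v v = complex_of_real c *s v" using F(5) x(3) by simp
  qed
qed

lemma mm_column: "(A ** U) $ a $ j = (A *v column j U) $ a"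
  by (simp add: matrix_matrix_mult_def matrix_vector_mult_def column_def)

lemma spectral:
  fixes A :: "complex^'n^'n"
  assumes herm: "hermitian_op A"
  shows "\<exists>U l. unitary_op U \<and> A = U ** cdiag l ** cadj U \<and>
     (\<forall>j. A *v column j U = complex_of_real (l j) *s column j U)"
proof -
  obtain F where F: "finite F" "card F = CARD('n)" "\<forall>v\<in>F. cinner v v = 1"
     "\<forall>v\<in>F. \<forall>w\<in>F. v \<noteq> w \<longrightarrow> cinner v w = 0" "\<forall>v\<in>F. \<exists>c::real. A *v v = complex_of_real c *s v"
    using eigen_family[OF herm, of "CARD('n)"] by auto
  obtain e where e: "bij_betw e (UNIV::'n set) F"
    using finite_same_card_bij[OF finite F(1)] F(2) by auto
  have eF: "e j \<in> F" for j using e by (auto simp: bij_betw_def)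
  have einj: "e i = e j \<Longrightarrow> i = j" for i j using e by (auto simp: bij_betw_def inj_def)
  define U :: "complex^'n^'n" where "U = (\<chi> a j. e j $ a)"
  have colU: "column j U = e j" for j by (simp add: U_def column_def vec_eq_iff)
  have U: "unitary_op U"
    by (rule unitary_from_cols) (auto simp: colU F(3) eF intro: F(4)[rule_format] dest: einj)
  define l where "l j = (SOME c::real. A *v e j = complex_of_real c *s e j)" for j
  have ev: "A *v column j U = complex_of_real (l j) *s column j U" for j
  proof -
    have "\<exists>c::real. A *v e j = complex_of_real c *s e j" using F(5) eF by blast
    then have "A *v e j = complex_of_real (l j) *s e j" unfolding l_def by (rule someI_ex)
    then show ?thesis by (simp add: colU)
  qed
  have AU: "A ** U = U ** cdiag l"
  proof -
    have "(A ** U) $ a $ j = (U ** cdiag l) $ a $ j" for a j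
      unfolding mm_column[of A] ev mult_cdiag_right by (simp add: column_def mult.commute)
    then show ?thesis by (simp add: vec_eq_iff)
  qed
  have "A = A ** (U ** cadj U)" using U by (simp add: unitary_op_def)
  also have "\<dots> = U ** cdiag l ** cadj U" by (simp add: matrix_mul_assoc AU)
  finally show ?thesis using U ev by blast
qed

lemma rel_sum_inf:
  fixes p q :: "'n::finite \<Rightarrow> real"
  assumes "p i \<noteq> 0" "q i = 0"
  shows "(\<Sum>j\<in>UNIV. rel_term (p j) (q j)) = \<infinity>"
  using assms by (subst sum_Pinfty) (auto simp: rel_term_def)

lemma rel_sum_fin:
  fixes p q :: "'n::finite \<Rightarrow> real"
  assumes "\<And>j. p j \<noteq> 0 \<Longrightarrow> q j \<noteq> 0"
  shows "(\<Sum>j\<in>UNIV. rel_term (p j) (q j)) = ereal (\<Sum>j\<in>UNIV. (if p j = 0 then 0 else p j * ln (p j / q j)))"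
proof -
  have "(\<Sum>j\<in>UNIV. rel_term (p j) (q j)) = (\<Sum>j\<in>UNIV. ereal (if p j = 0 then 0 else p j * ln (p j / q j)))"
    by (rule sum.cong) (use assms in \<open>auto simp: rel_term_def\<close>)
  then show ?thesis by simp
qed

lemma classical_upper:
  fixes p q lam :: "'n::finite \<Rightarrow> real"
  assumes p0: "\<And>j. 0 \<le> p j" and q0: "\<And>j. 0 \<le> q j" and p1: "(\<Sum>j\<in>UNIV. p j) = 1"
    and lam: "\<And>j. 0 < lam j" and T: "0 < (\<Sum>j\<in>UNIV. q j * lam j)"
  shows "ereal ((\<Sum>j\<in>UNIV. p j * ln (lam j)) - ln (\<Sum>j\<in>UNIV. q j * lam j))
     \<le> (\<Sum>j\<in>UNIV. rel_term (p j) (q j))"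
proof (cases "\<exists>i. p i \<noteq> 0 \<and> q i = 0")
  case True
  then obtain i where "p i \<noteq> 0" "q i = 0" by blast
  then show ?thesis by (simp add: rel_sum_inf)
next
  case False
  then have nz: "\<And>j. p j \<noteq> 0 \<Longrightarrow> q j \<noteq> 0" by blast
  define T where "T = (\<Sum>j\<in>UNIV. q j * lam j)"
  define g where "g j = (if p j = 0 then 0 else p j * ln (p j / q j))" for j
  have tm: "p j * ln (lam j) - p j * ln T - g j \<le> q j * lam j / T - p j" for j
  proof (cases "p j = 0")
    case True
    then show ?thesis using q0[of j] lam[of j] T by (simp add: g_def T_def)
  next
    case False
    then have pp: "p j > 0" using p0[of j] by simp
    have qp: "q j > 0" using nz[OF False] q0[of j] by simp
    have Tp: "T > 0" using T by (simp add: T_def)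
    define x where "x = q j * lam j / (p j * T)"
    have xp: "x > 0" using pp qp Tp lam[of j] by (simp add: x_def)
    have "ln x = ln (lam j) + ln (q j) - ln (p j) - ln T"
      using pp qp Tp lam[of j] by (simp add: x_def ln_div ln_mult)
    moreover have "ln (p j / q j) = ln (p j) - ln (q j)" using pp qp by (simp add: ln_div)
    ultimately have L: "ln (lam j) = ln T + ln x + ln (p j / q j)" by linarith
    have e: "p j * ln (lam j) - p j * ln T - g j = p j * ln x"
      using False unfolding L by (simp add: g_def algebra_simps)
    have "p j * ln x \<le> p j * (x - 1)" using ln_le_minus_one[OF xp] pp by (simp add: mult_left_mono)
    also have "\<dots> = q j * lam j / T - p j" using pp Tp by (simp add: x_def field_simps)
    finally show ?thesis using e by simp
  qed
  have "(\<Sum>j\<in>UNIV. p j * ln (lam j) - p j * ln T - g j) \<le> (\<Sum>j\<in>UNIV. q j * lam j / T - p j)"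
    by (rule sum_mono) (rule tm)
  also have "\<dots> = 0" using T by (simp add: sum_subtractf sum_divide_distrib[symmetric] T_def p1)
  finally have "(\<Sum>j\<in>UNIV. p j * ln (lam j)) - ln T \<le> (\<Sum>j\<in>UNIV. g j)"
    by (simp add: sum_subtractf sum_distrib_right[symmetric] p1)
  moreover have "(\<Sum>j\<in>UNIV. rel_term (p j) (q j)) = ereal (\<Sum>j\<in>UNIV. g j)"
    using rel_sum_fin[OF nz] by (simp add: g_def)
  ultimately show ?thesis by (simp add: T_def)
qed

lemma classical_lower:
  fixes p q :: "'n::finite \<Rightarrow> real"
  assumes p0: "\<And>j. 0 \<le> p j" and q0: "\<And>j. 0 \<le> q j" and p1: "(\<Sum>j\<in>UNIV. p j) = 1"
  shows "(\<Sum>j\<in>UNIV. rel_term (p j) (q j)) \<le>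
     (SUP mu\<in>{mu::'n\<Rightarrow>real. \<forall>j. 0 < mu j}. ereal ((\<Sum>j\<in>UNIV. p j * ln (mu j)) + 1 - (\<Sum>j\<in>UNIV. q j * mu j)))"
    (is "_ \<le> ?S")
proof (cases "\<exists>i. p i \<noteq> 0 \<and> q i = 0")
  case True
  then obtain i where pi: "p i \<noteq> 0" and qi: "q i = 0" by blast
  have pip: "p i > 0" using pi p0[of i] by simp
  define Q where "Q = (\<Sum>j\<in>UNIV. q j)"
  have "?S = \<infinity>"
  proof (rule ereal_top)
    fix B :: real
    define t where "t = exp ((B + Q) / p i)"
    define mu where "mu = (\<lambda>j. if j = i then t else 1::real)"
    have mup: "mu \<in> {mu. \<forall>j. 0 < mu j}" by (simp add: mu_def t_def)
    have s1: "(\<Sum>j\<in>UNIV. p j * ln (mu j)) = B + Q"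
    proof -
      have "(\<Sum>j\<in>UNIV. p j * ln (mu j)) = (\<Sum>j\<in>UNIV. if j = i then p i * ln t else 0)"
        by (rule sum.cong) (auto simp: mu_def)
      also have "\<dots> = B + Q" using pip by (simp add: t_def)
      finally show ?thesis .
    qed
    have s2: "(\<Sum>j\<in>UNIV. q j * mu j) \<le> Q"
    proof -
      have "(\<Sum>j\<in>UNIV. q j * mu j) = (\<Sum>j\<in>UNIV. q j)"
        by (rule sum.cong) (auto simp: mu_def qi)
      then show ?thesis by (simp add: Q_def)
    qed
    have "ereal B \<le> ereal ((\<Sum>j\<in>UNIV. p j * ln (mu j)) + 1 - (\<Sum>j\<in>UNIV. q j * mu j))"
      using s1 s2 by simp
    also have "\<dots> \<le> ?S" by (rule SUP_upper[OF mup])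
    finally show "ereal B \<le> ?S" .
  qed
  then show ?thesis by simp
next
  case False
  then have nz: "\<And>j. p j \<noteq> 0 \<Longrightarrow> q j \<noteq> 0" by blast
  define g where "g j = (if p j = 0 then 0 else p j * ln (p j / q j))" for j
  define Q where "Q = (\<Sum>j\<in>UNIV. q j)"
  have Q0: "Q \<ge> 0" unfolding Q_def by (rule sum_nonneg) (use q0 in auto)
  have "ereal (\<Sum>j\<in>UNIV. g j) \<le> ?S"
  proof (rule ereal_le_epsilon2)
    fix e :: real assume e: "0 < e"
    define d where "d = e / (Q + 1)"
    have d: "d > 0" using e Q0 by (simp add: d_def)
    define mu where "mu = (\<lambda>j. if p j = 0 then d else p j / q j)"
    have mup: "mu \<in> {mu. \<forall>j. 0 < mu j}"
      using d nz p0 q0 by (auto simp: mu_def less_le)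
    have s1: "(\<Sum>j\<in>UNIV. p j * ln (mu j)) = (\<Sum>j\<in>UNIV. g j)"
      by (rule sum.cong) (auto simp: mu_def g_def)
    have s2: "(\<Sum>j\<in>UNIV. q j * mu j) \<le> (\<Sum>j\<in>UNIV. p j + d * q j)"
    proof (rule sum_mono)
      fix j
      show "q j * mu j \<le> p j + d * q j"
        using nz[of j] p0[of j] q0[of j] d by (auto simp: mu_def mult.commute)
    qed
    also have "\<dots> = 1 + d * Q" by (simp add: sum.distrib p1 Q_def sum_distrib_left)
    finally have s2': "(\<Sum>j\<in>UNIV. q j * mu j) \<le> 1 + d * Q" .
    have "d * Q \<le> e"
    proof -
      have "d * Q = e * (Q / (Q + 1))" by (simp add: d_def)
      also have "\<dots> \<le> e * 1" using e Q0 by (intro mult_left_mono) auto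
      finally show ?thesis by simp
    qed
    then have "(\<Sum>j\<in>UNIV. g j) \<le> ((\<Sum>j\<in>UNIV. p j * ln (mu j)) + 1 - (\<Sum>j\<in>UNIV. q j * mu j)) + e"
      using s1 s2' by simp
    then have "ereal (\<Sum>j\<in>UNIV. g j) \<le> ereal ((\<Sum>j\<in>UNIV. p j * ln (mu j)) + 1 - (\<Sum>j\<in>UNIV. q j * mu j)) + ereal e"
      by simp
    also have "\<dots> \<le> ?S + ereal e" by (intro add_right_mono SUP_upper[OF mup])
    finally show "ereal (\<Sum>j\<in>UNIV. g j) \<le> ?S + ereal e" .
  qed
  moreover have "(\<Sum>j\<in>UNIV. rel_term (p j) (q j)) = ereal (\<Sum>j\<in>UNIV. g j)"
    using rel_sum_fin[OF nz] by (simp add: g_def)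
  ultimately show ?thesis by simp
qed

definition colproj :: "complex^'n^'n \<Rightarrow> 'n \<Rightarrow> complex^'n^'n" where
  "colproj U j = projv (column j U)"

lemma projv_mult: "(projv v ** projv w) $ a $ b = v $ a * cinner v w * cnj (w $ b)"
  by (simp add: projv_def matrix_matrix_mult_def cinner_def sum_distrib_left sum_distrib_right mult_ac)

lemma colproj_meas:
  fixes U :: "complex^'n^'n"
  assumes U: "unitary_op U"
  shows "proj_meas (colproj U)"
  unfolding proj_meas_def
proof (intro conjI allI impI)
  fix i
  show "rank_one_proj (colproj U i)"
    unfolding rank_one_proj_def colproj_def
    by (rule exI[of _ "column i U"]) (use unitary_cols[OF U, of i i] in \<open>simp add: cinner_def projv_def\<close>)
next
  fix i j :: 'n assume "i \<noteq> j"
  then have "cinner (column i U) (column j U) = 0" using unitary_cols[OF U, of i j] by simp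
  then show "colproj U i ** colproj U j = 0"
    unfolding colproj_def by (simp add: vec_eq_iff projv_mult)
qed

lemma meas_unitary:
  fixes P :: "'n \<Rightarrow> complex^'n^'n"
  assumes P: "proj_meas P"
  shows "\<exists>U. unitary_op U \<and> P = colproj U"
proof -
  have "\<forall>j. \<exists>v. cinner v v = 1 \<and> P j = projv v"
    using P unfolding proj_meas_def rank_one_proj_def cinner_def projv_def by blast
  then obtain v where v: "\<And>j. cinner (v j) (v j) = 1" "\<And>j. P j = projv (v j)" by metis
  have orth: "cinner (v i) (v j) = 0" if ij: "i \<noteq> j" for i j
  proof -
    have "v i \<noteq> 0" "v j \<noteq> 0" using v(1)[of i] v(1)[of j] by auto
    then obtain a b where a: "v i $ a \<noteq> 0" and b: "v j $ b \<noteq> 0" by (auto simp: vec_eq_iff)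
    have "(projv (v i) ** projv (v j)) $ a $ b = 0"
      using P ij unfolding proj_meas_def v(2) by simp
    then show ?thesis using a b by (simp add: projv_mult)
  qed
  define U :: "complex^'n^'n" where "U = (\<chi> a j. v j $ a)"
  have colU: "column j U = v j" for j by (simp add: U_def column_def vec_eq_iff)
  have U: "unitary_op U"
    by (rule unitary_from_cols) (auto simp: colU v(1) orth)
  have "P = colproj U" by (simp add: fun_eq_iff colproj_def colU v(2))
  with U show ?thesis by blast
qed

lemma tr_colproj: "trace (colproj U j ** R) = qform R (column j U)"
  by (simp add: colproj_def trace_projv)

lemma psd_qform_nonneg: "psd_op R \<Longrightarrow> 0 \<le> Re (qform R x)"
  by (simp add: psd_op_def)

lemma p_sum:
  fixes U R :: "complex^'n^'n"
  assumes U: "unitary_op U" and R: "trace R = 1"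
  shows "(\<Sum>j\<in>UNIV. Re (qform R (column j U))) = 1"
proof -
  have "U ** cdiag (\<lambda>_. 1) ** cadj U = mat 1" using U by (simp add: cdiag_one unitary_op_def)
  then have "trace (R ** (U ** cdiag (\<lambda>_. 1) ** cadj U)) = 1" using R by simp
  then have "(\<Sum>j\<in>UNIV. qform R (column j U)) = 1" unfolding trace_udu by simp
  then have "Re (\<Sum>j\<in>UNIV. qform R (column j U)) = 1" by simp
  then show ?thesis by (simp add: Re_sum)
qed

lemma psd_zero_vec:
  fixes R :: "complex^'n^'n"
  assumes R: "psd_op R" and v: "Re (qform R v) = 0"
  shows "R *v v = 0"
proof -
  have herm: "hermitian_op R" using R by (simp add: psd_op_def)
  have c0: "Re (cinner y (R *v v)) = 0" for y
  proof -
    define c where "c = Re (cinner y (R *v v))"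
    have "2 * t * (- c) \<le> t^2 * Re (qform R y)" for t
    proof -
      have h1: "Re (cinner v (R *v y)) = Re (cinner y (R *v v))"
      proof -
        have "cinner v (R *v y) = cnj (cinner y (R *v v))" by (simp add: cinner_herm[OF herm] cinner_cnj)
        then show ?thesis by simp
      qed
      have "0 \<le> Re (qform R (v + complex_of_real t *s y))" by (rule psd_qform_nonneg[OF R])
      also have "Re (qform R (v + complex_of_real t *s y)) = 2 * t * c + t^2 * Re (qform R y)"
        unfolding qform_cinner mv_add mv_scale Re_cinner_expand h1
        using v by (simp add: qform_cinner c_def power2_eq_square)
      finally show ?thesis by simp
    qed
    then have "- c = 0" by (rule quad_zero)
    then show ?thesis by (simp add: c_def)
  qed
  have "Re (cinner (R *v v) (R *v v)) = 0" by (rule c0)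
  then have "cinner (R *v v) (R *v v) = 0" by (simp add: cinner_self)
  then show ?thesis by (simp add: cinner_self_eq0)
qed

lemma trace_sigma:
  fixes U S :: "complex^'n^'n"
  shows "Re (trace (S ** (U ** cdiag l ** cadj U))) = (\<Sum>j\<in>UNIV. l j * Re (qform S (column j U)))"
  unfolding trace_udu by (simp add: Re_sum)

lemma trace_sigma_pos:
  fixes U S :: "complex^'n^'n"
  assumes S: "psd_op S" "S \<noteq> 0" and U: "unitary_op U" and l: "\<And>j. 0 < l j"
  shows "0 < (\<Sum>j\<in>UNIV. l j * Re (qform S (column j U)))"
proof (rule ccontr)
  assume "\<not> ?thesis"
  moreover have nn: "\<forall>j\<in>UNIV. 0 \<le> l j * Re (qform S (column j U))"
    using l psd_qform_nonneg[OF S(1)] by (simp add: less_imp_le)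
  moreover have "0 \<le> (\<Sum>j\<in>UNIV. l j * Re (qform S (column j U)))"
    using nn by (simp add: sum_nonneg)
  ultimately have "(\<Sum>j\<in>UNIV. l j * Re (qform S (column j U))) = 0" by simp
  then have "\<forall>j\<in>UNIV. l j * Re (qform S (column j U)) = 0"
    using sum_nonneg_eq_0_iff[of UNIV "\<lambda>j. l j * Re (qform S (column j U))"] nn by simp
  then have "Re (qform S (column j U)) = 0" for j using l[of j] by (metis UNIV_I less_irrefl mult_eq_0_iff)
  then have Sc: "S *v column j U = 0" for j by (rule psd_zero_vec[OF S(1)])
  have "S ** U = 0"
    by (simp add: vec_eq_iff mm_column Sc)
  moreover have "(0::complex^'n^'n) ** cadj U = 0" by (simp add: matrix_matrix_mult_def vec_eq_iff)
  ultimately have "S = 0" using U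
    by (metis matrix_mul_assoc matrix_mul_rid unitary_op_def)
  with S(2) show False by simp
qed

lemma pd_spectral:
  fixes W :: "complex^'n^'n"
  assumes W: "pd_op W"
  shows "\<exists>U l. unitary_op U \<and> (\<forall>j. 0 < l j) \<and> W = U ** cdiag l ** cadj U"
proof -
  have herm: "hermitian_op W" using W by (simp add: pd_op_def)
  obtain U l where U: "unitary_op U" and eq: "W = U ** cdiag l ** cadj U"
    and ev: "\<And>j. W *v column j U = complex_of_real (l j) *s column j U"
    using spectral[OF herm] by blast
  have "0 < l j" for j
  proof -
    have c1: "cinner (column j U) (column j U) = 1" using unitary_cols[OF U, of j j] by simp
    then have "column j U \<noteq> 0" by auto
    then have "0 < Re (qform W (column j U))" using W by (simp add: pd_op_def)
    also have "qform W (column j U) = complex_of_real (l j)"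
      by (simp add: qform_cinner ev cinner_scale_right c1)
    finally show ?thesis by simp
  qed
  with U eq show ?thesis by blast
qed

lemma pd_qform_col_pos:
  fixes U R :: "complex^'n^'n"
  assumes R: "pd_op R" and U: "unitary_op U"
  shows "0 < Re (qform R (column j U))"
proof -
  have "cinner (column j U) (column j U) = 1" using unitary_cols[OF U, of j j] by simp
  then have "column j U \<noteq> 0" by auto
  then show ?thesis using R by (simp add: pd_op_def)
qed

definition pp :: "complex^'n^'n \<Rightarrow> complex^'n^'n \<Rightarrow> 'n \<Rightarrow> real" where
  "pp R U j = Re (qform R (column j U))"

lemma relsum_colproj:
  "(\<Sum>i\<in>UNIV. rel_term (Re (trace (colproj U i ** R))) (Re (trace (colproj U i ** S))))
   = (\<Sum>j\<in>UNIV. rel_term (pp R U j) (pp S U j))"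
  by (simp add: tr_colproj pp_def)

lemma E_vals:
  fixes U R S :: "complex^'n^'n"
  assumes U: "unitary_op U" and l: "\<And>j. 0 < l j"
  shows "Re (trace (R ** op_log (U ** cdiag l ** cadj U))) = (\<Sum>j\<in>UNIV. pp R U j * ln (l j))"
    and "Re (trace (S ** (U ** cdiag l ** cadj U))) = (\<Sum>j\<in>UNIV. pp S U j * l j)"
  unfolding op_log_udu[OF U l] trace_sigma pp_def by (simp_all add: mult.commute)

lemma step1:
  fixes \<rho> \<sigma> W :: "complex^'n^'n"
  assumes \<rho>: "density_op \<rho>" and \<sigma>: "psd_op \<sigma>" "\<sigma> \<noteq> 0" and W: "pd_op W"
  shows "ereal (Re (trace (\<rho> ** op_log W)) - ln (Re (trace (\<sigma> ** W)))) \<le> proj_meas_rel_ent \<rho> \<sigma>"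
    and "ereal (Re (trace (\<rho> ** op_log W)) + 1 - Re (trace (\<sigma> ** W)))
         \<le> ereal (Re (trace (\<rho> ** op_log W)) - ln (Re (trace (\<sigma> ** W))))"
proof -
  obtain U l where U: "unitary_op U" and l: "\<forall>j. 0 < l j" and eq: "W = U ** cdiag l ** cadj U"
    using pd_spectral[OF W] by blast
  have l': "\<And>j. 0 < l j" using l by blast
  have T: "0 < (\<Sum>j\<in>UNIV. pp \<sigma> U j * l j)"
    using trace_sigma_pos[OF \<sigma> U l'] by (simp add: pp_def mult.commute)
  have "ereal ((\<Sum>j\<in>UNIV. pp \<rho> U j * ln (l j)) - ln (\<Sum>j\<in>UNIV. pp \<sigma> U j * l j))
     \<le> (\<Sum>j\<in>UNIV. rel_term (pp \<rho> U j) (pp \<sigma> U j))"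
  proof (rule classical_upper)
    show "0 \<le> pp \<rho> U j" for j using \<rho> by (simp add: pp_def density_op_def psd_qform_nonneg)
    show "0 \<le> pp \<sigma> U j" for j using \<sigma> by (simp add: pp_def psd_qform_nonneg)
    show "(\<Sum>j\<in>UNIV. pp \<rho> U j) = 1" using p_sum[OF U] \<rho> by (simp add: pp_def density_op_def)
  qed (use l' T in auto)
  also have "\<dots> \<le> proj_meas_rel_ent \<rho> \<sigma>"
    unfolding proj_meas_rel_ent_def relsum_colproj[symmetric]
    by (rule SUP_upper) (simp add: colproj_meas[OF U])
  finally show "ereal (Re (trace (\<rho> ** op_log W)) - ln (Re (trace (\<sigma> ** W)))) \<le> proj_meas_rel_ent \<rho> \<sigma>"
    unfolding eq E_vals[OF U l'] .
  have "ln (\<Sum>j\<in>UNIV. pp \<sigma> U j * l j) \<le> (\<Sum>j\<in>UNIV. pp \<sigma> U j * l j) - 1"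
    by (rule ln_le_minus_one[OF T])
  then show "ereal (Re (trace (\<rho> ** op_log W)) + 1 - Re (trace (\<sigma> ** W)))
         \<le> ereal (Re (trace (\<rho> ** op_log W)) - ln (Re (trace (\<sigma> ** W))))"
    unfolding eq E_vals[OF U l'] by simp
qed

lemma step3:
  fixes \<rho> \<sigma> :: "complex^'n^'n"
  assumes \<rho>: "density_op \<rho>" and \<sigma>: "psd_op \<sigma>"
  shows "proj_meas_rel_ent \<rho> \<sigma> \<le>
    (SUP \<omega>\<in>{\<omega>. pd_op \<omega>}. ereal (Re (trace (\<rho> ** op_log \<omega>)) + 1 - Re (trace (\<sigma> ** \<omega>))))"
    (is "_ \<le> ?S")
  unfolding proj_meas_rel_ent_def
proof (rule SUP_least)
  fix P :: "'n \<Rightarrow> complex^'n^'n" assume "P \<in> {P. proj_meas P}"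
  then obtain U :: "complex^'n^'n" where U: "unitary_op U" and PU: "P = colproj U" using meas_unitary by blast
  have "(\<Sum>j\<in>UNIV. rel_term (pp \<rho> U j) (pp \<sigma> U j)) \<le>
     (SUP mu\<in>{mu::'n\<Rightarrow>real. \<forall>j. 0 < mu j}. ereal ((\<Sum>j\<in>UNIV. pp \<rho> U j * ln (mu j)) + 1 - (\<Sum>j\<in>UNIV. pp \<sigma> U j * mu j)))"
  proof (rule classical_lower)
    show "0 \<le> pp \<rho> U j" for j using \<rho> by (simp add: pp_def density_op_def psd_qform_nonneg)
    show "0 \<le> pp \<sigma> U j" for j using \<sigma> by (simp add: pp_def psd_qform_nonneg)
    show "(\<Sum>j\<in>UNIV. pp \<rho> U j) = 1" using p_sum[OF U] \<rho> by (simp add: pp_def density_op_def)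
  qed
  also have "\<dots> \<le> ?S"
  proof (rule SUP_least)
    fix mu :: "'n \<Rightarrow> real" assume "mu \<in> {mu. \<forall>j. 0 < mu j}"
    then have mu: "\<And>j. 0 < mu j" by simp
    have pd: "U ** cdiag mu ** cadj U \<in> {\<omega>. pd_op \<omega>}" using pd_udu[OF U mu] by simp
    show "ereal ((\<Sum>j\<in>UNIV. pp \<rho> U j * ln (mu j)) + 1 - (\<Sum>j\<in>UNIV. pp \<sigma> U j * mu j)) \<le> ?S"
      using SUP_upper[OF pd, of "\<lambda>\<omega>. ereal (Re (trace (\<rho> ** op_log \<omega>)) + 1 - Re (trace (\<sigma> ** \<omega>)))"]
      unfolding E_vals[OF U mu] .
  qed
  finally show "(\<Sum>i\<in>UNIV. rel_term (Re (trace (P i ** \<rho>))) (Re (trace (P i ** \<sigma>)))) \<le> ?S"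
    unfolding PU relsum_colproj .
qed

lemma cadj_mv_cinner: "(cadj V *v x) $ j = cinner (column j V) x"
  by (simp add: cadj_def matrix_vector_mult_def cinner_def column_def)

lemma step4:
  fixes \<rho> \<sigma> :: "complex^'n^'n"
  assumes \<rho>: "density_op \<rho>" and \<sigma>: "psd_op \<sigma>"
    and fin: "proj_meas_rel_ent \<rho> \<sigma> \<noteq> \<infinity>"
  shows "op_support \<rho> \<subseteq> op_support \<sigma>"
proof -
  have \<rho>psd: "psd_op \<rho>" using \<rho> by (simp add: density_op_def)
  have hs: "hermitian_op \<sigma>" using \<sigma> by (simp add: psd_op_def)
  have hr: "hermitian_op \<rho>" using \<rho>psd by (simp add: psd_op_def)
  obtain V m where V: "unitary_op V" and eq: "\<sigma> = V ** cdiag m ** cadj V"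
    and ev: "\<And>j. \<sigma> *v column j V = complex_of_real (m j) *s column j V"
    using spectral[OF hs] by blast
  have qm: "pp \<sigma> V j = m j" for j
  proof -
    have c1: "cinner (column j V) (column j V) = 1" using unitary_cols[OF V, of j j] by simp
    show ?thesis by (simp add: pp_def qform_cinner ev cinner_scale_right c1)
  qed
  have "(\<Sum>j\<in>UNIV. rel_term (pp \<rho> V j) (pp \<sigma> V j)) \<le> proj_meas_rel_ent \<rho> \<sigma>"
    unfolding proj_meas_rel_ent_def relsum_colproj[symmetric]
    by (rule SUP_upper) (simp add: colproj_meas[OF V])
  then have "(\<Sum>j\<in>UNIV. rel_term (pp \<rho> V j) (pp \<sigma> V j)) \<noteq> \<infinity>" using fin by auto
  then have "\<not> (pp \<rho> V j \<noteq> 0 \<and> pp \<sigma> V j = 0)" for j using rel_sum_inf by metis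
  then have p0: "m j = 0 \<Longrightarrow> pp \<rho> V j = 0" for j using qm by metis
  have r0: "m j = 0 \<Longrightarrow> \<rho> *v column j V = 0" for j
    using psd_zero_vec[OF \<rho>psd] p0[of j] by (simp add: pp_def)
  show ?thesis
  proof
    fix x assume "x \<in> op_support \<rho>"
    then obtain y where x: "x = \<rho> *v y" by (auto simp: op_support_def)
    define c where "c = cadj V *v x"
    have c0: "m j = 0 \<Longrightarrow> c $ j = 0" for j
    proof -
      assume "m j = 0"
      have "c $ j = cinner (column j V) (\<rho> *v y)" by (simp add: c_def cadj_mv_cinner x)
      also have "\<dots> = cinner (\<rho> *v column j V) y" by (rule cinner_herm[OF hr])
      also have "\<dots> = 0" using r0[OF \<open>m j = 0\<close>] by simp
      finally show ?thesis .
    qed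
    define w where "w = (\<chi> j. if m j = 0 then 0 else c $ j / complex_of_real (m j))"
    have dw: "cdiag m *v w = c"
      by (simp add: cdiag_vec w_def vec_eq_iff c0)
    have "\<sigma> *v (V *v w) = V *v (cdiag m *v (cadj V *v (V *v w)))"
      unfolding eq by (simp add: matrix_vector_mul_assoc matrix_mul_assoc)
    also have "\<dots> = V *v (cadj V *v x)" by (simp add: unitary_vec2[OF V] dw c_def)
    also have "\<dots> = x" by (rule unitary_vec1[OF V])
    finally show "x \<in> op_support \<sigma>" unfolding op_support_def by (metis rangeI)
  qed
qed

lemma norm_vec_le_sum: "norm (x::'a::real_normed_vector^'n) \<le> (\<Sum>i\<in>UNIV. norm (x$i))"
  by (simp add: norm_vec_def L2_set_le_sum)

lemma unitary_set_eq:
  "{U::complex^'n^'n. unitary_op U} =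
   (\<Inter>i. \<Inter>j. {U. (\<Sum>a\<in>UNIV. cnj (U$a$i) * U$a$j) = (if i = j then 1 else 0)})"
proof -
  have "unitary_op U \<longleftrightarrow> (\<forall>i j. cinner (column i U) (column j U) = (if i = j then 1 else 0))" for U :: "complex^'n^'n"
    using unitary_cols[of U] unitary_from_cols[of U] by blast
  then show ?thesis by (auto simp: cinner_def column_def)
qed

lemma compact_unitary: "compact {U::complex^'n^'n. unitary_op U}"
unfolding compact_eq_bounded_closed
proof (rule conjI)
  show "bounded {U::complex^'n^'n. unitary_op U}"
    unfolding bounded_iff
  proof (intro exI ballI)
    fix U :: "complex^'n^'n" assume "U \<in> {U. unitary_op U}"
    then have U: "unitary_op U" by simp
    have e1: "norm (U$a$j) \<le> 1" for a j
    proof -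
      have "cinner (column j U) (column j U) = 1" using unitary_cols[OF U, of j j] by simp
      then have "(norm (column j U))^2 = 1" by (simp add: norm_sq_re)
      then have "norm (column j U) = 1" by (rule norm_sq1)
      moreover have "norm ((column j U)$a) \<le> norm (column j U)" by (rule Finite_Cartesian_Product.norm_nth_le)
      ultimately show ?thesis by (simp add: column_def)
    qed
    have "norm U \<le> (\<Sum>a\<in>UNIV. norm (U$a))" by (rule norm_vec_le_sum)
    also have "\<dots> \<le> (\<Sum>a\<in>UNIV. \<Sum>j\<in>UNIV. norm (U$a$j))" by (intro sum_mono norm_vec_le_sum)
    also have "\<dots> \<le> (\<Sum>a\<in>(UNIV::'n set). \<Sum>j\<in>(UNIV::'n set). 1)" by (intro sum_mono e1)
    finally show "norm U \<le> real (CARD('n) * CARD('n))" by simp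
  qed
next
  show "closed {U::complex^'n^'n. unitary_op U}"
    unfolding unitary_set_eq
    by (intro closed_INT ballI closed_Collect_eq continuous_on_sum continuous_on_mult continuous_on_cnj continuous_on_component continuous_on_id continuous_on_const)
qed

lemma step5:
  fixes \<rho> \<sigma> :: "complex^'n^'n"
  assumes \<rho>: "density_op \<rho>" "pd_op \<rho>" and \<sigma>: "pd_op \<sigma>"
  shows "\<exists>\<omega>. pd_op \<omega> \<and> proj_meas_rel_ent \<rho> \<sigma> = ereal (Re (trace (\<rho> ** op_log \<omega>)) - ln (Re (trace (\<sigma> ** \<omega>))))
           \<and> proj_meas_rel_ent \<rho> \<sigma> = ereal (Re (trace (\<rho> ** op_log \<omega>)) + 1 - Re (trace (\<sigma> ** \<omega>)))"
proof -
  define g where "g U = (\<Sum>j\<in>UNIV. pp \<rho> U j * ln (pp \<rho> U j / pp \<sigma> U j))" for U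
  have ppos: "unitary_op U \<Longrightarrow> 0 < pp \<rho> U j" for U j
    unfolding pp_def by (rule pd_qform_col_pos[OF \<rho>(2)])
  have qpos: "unitary_op U \<Longrightarrow> 0 < pp \<sigma> U j" for U j
    unfolding pp_def by (rule pd_qform_col_pos[OF \<sigma>])
  have rs: "unitary_op U \<Longrightarrow> (\<Sum>j\<in>UNIV. rel_term (pp \<rho> U j) (pp \<sigma> U j)) = ereal (g U)" for U
  proof -
    assume U: "unitary_op U"
    have "(\<Sum>j\<in>UNIV. rel_term (pp \<rho> U j) (pp \<sigma> U j)) =
        ereal (\<Sum>j\<in>UNIV. if pp \<rho> U j = 0 then 0 else pp \<rho> U j * ln (pp \<rho> U j / pp \<sigma> U j))"
      by (rule rel_sum_fin) (use qpos[OF U] in \<open>simp add: less_imp_neq[symmetric]\<close>)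
    also have "\<dots> = ereal (g U)" unfolding g_def using ppos[OF U] by (simp add: less_imp_neq[symmetric])
    finally show ?thesis .
  qed
  have cp: "continuous_on S (\<lambda>U::complex^'n^'n. pp R U j)" for S R j
    unfolding pp_def qform_def column_def vec_lambda_beta
    by (intro continuous_on_Re continuous_on_sum continuous_on_mult continuous_on_cnj
        continuous_on_component continuous_on_id continuous_on_const)
  have cont: "continuous_on {U. unitary_op U} g"
    unfolding g_def
    using ppos qpos
    by (intro continuous_on_sum continuous_on_mult continuous_on_ln continuous_on_divide cp ballI)
       (auto simp: order_less_imp_not_eq2)
  obtain U0 where U0: "unitary_op U0" and max: "\<And>U. unitary_op U \<Longrightarrow> g U \<le> g U0"
    using continuous_attains_sup[OF compact_unitary _ cont] unitary_mat1 by blast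
  have D: "proj_meas_rel_ent \<rho> \<sigma> = ereal (g U0)"
  proof (rule antisym)
    show "proj_meas_rel_ent \<rho> \<sigma> \<le> ereal (g U0)"
      unfolding proj_meas_rel_ent_def
    proof (rule SUP_least)
      fix P :: "'n \<Rightarrow> complex^'n^'n" assume "P \<in> {P. proj_meas P}"
      then obtain U :: "complex^'n^'n" where U: "unitary_op U" and PU: "P = colproj U"
        using meas_unitary by blast
      show "(\<Sum>i\<in>UNIV. rel_term (Re (trace (P i ** \<rho>))) (Re (trace (P i ** \<sigma>)))) \<le> ereal (g U0)"
        unfolding PU relsum_colproj rs[OF U] using max[OF U] by simp
    qed
    show "ereal (g U0) \<le> proj_meas_rel_ent \<rho> \<sigma>"
      unfolding proj_meas_rel_ent_def rs[OF U0, symmetric] relsum_colproj[symmetric]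
      by (rule SUP_upper) (simp add: colproj_meas[OF U0])
  qed
  define mu where "mu j = pp \<rho> U0 j / pp \<sigma> U0 j" for j
  have mu: "\<And>j. 0 < mu j" using ppos[OF U0] qpos[OF U0] by (simp add: mu_def)
  define \<omega> where "\<omega> = U0 ** cdiag mu ** cadj U0"
  have pd: "pd_op \<omega>" unfolding \<omega>_def by (rule pd_udu[OF U0 mu])
  have p1: "(\<Sum>j\<in>UNIV. pp \<rho> U0 j) = 1" using p_sum[OF U0] \<rho>(1) by (simp add: pp_def density_op_def)
  have s1: "Re (trace (\<rho> ** op_log \<omega>)) = g U0"
    unfolding \<omega>_def E_vals[OF U0 mu] g_def mu_def ..
  have s2: "Re (trace (\<sigma> ** \<omega>)) = 1"
  proof -
    have "Re (trace (\<sigma> ** \<omega>)) = (\<Sum>j\<in>UNIV. pp \<sigma> U0 j * mu j)" unfolding \<omega>_def E_vals[OF U0 mu] ..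
    also have "\<dots> = (\<Sum>j\<in>UNIV. pp \<rho> U0 j)"
      by (rule sum.cong) (use qpos[OF U0] in \<open>auto simp: mu_def less_imp_neq[symmetric]\<close>)
    finally show ?thesis using p1 by simp
  qed
  show ?thesis using pd D s1 s2 by auto
qed

theorem lemma1:
  fixes \<rho> \<sigma> :: "complex^'n^'n"
  assumes "density_op \<rho>" and "psd_op \<sigma>" and "\<sigma> \<noteq> 0"
  shows "proj_meas_rel_ent \<rho> \<sigma> =
           (SUP \<omega>\<in>{\<omega>. pd_op \<omega>}. ereal (Re (trace (\<rho> ** op_log \<omega>)) - ln (Re (trace (\<sigma> ** \<omega>)))))
     \<and> proj_meas_rel_ent \<rho> \<sigma> =
           (SUP \<omega>\<in>{\<omega>. pd_op \<omega>}. ereal (Re (trace (\<rho> ** op_log \<omega>)) + 1 - Re (trace (\<sigma> ** \<omega>))))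
     \<and> (\<not> op_support \<rho> \<subseteq> op_support \<sigma> \<longrightarrow> proj_meas_rel_ent \<rho> \<sigma> = \<infinity>)
     \<and> (pd_op \<rho> \<and> pd_op \<sigma> \<longrightarrow>
           (\<exists>\<omega>. pd_op \<omega> \<and> proj_meas_rel_ent \<rho> \<sigma> =
              ereal (Re (trace (\<rho> ** op_log \<omega>)) - ln (Re (trace (\<sigma> ** \<omega>)))))
         \<and> (\<exists>\<omega>. pd_op \<omega> \<and> proj_meas_rel_ent \<rho> \<sigma> =
              ereal (Re (trace (\<rho> ** op_log \<omega>)) + 1 - Re (trace (\<sigma> ** \<omega>)))))"
proof -
  let ?D = "proj_meas_rel_ent \<rho> \<sigma>"
  let ?S1 = "(SUP \<omega>\<in>{\<omega>. pd_op \<omega>}. ereal (Re (trace (\<rho> ** op_log \<omega>)) - ln (Re (trace (\<sigma> ** \<omega>)))))"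
  let ?S2 = "(SUP \<omega>\<in>{\<omega>. pd_op \<omega>}. ereal (Re (trace (\<rho> ** op_log \<omega>)) + 1 - Re (trace (\<sigma> ** \<omega>))))"
  have 1: "?S1 \<le> ?D"
    by (rule SUP_least) (use step1(1)[OF assms] in auto)
  have 2: "?S2 \<le> ?S1"
  proof (rule SUP_least)
    fix \<omega> :: "complex^'n^'n" assume w: "\<omega> \<in> {\<omega>. pd_op \<omega>}"
    have "ereal (Re (trace (\<rho> ** op_log \<omega>)) + 1 - Re (trace (\<sigma> ** \<omega>)))
         \<le> ereal (Re (trace (\<rho> ** op_log \<omega>)) - ln (Re (trace (\<sigma> ** \<omega>))))"
      using step1(2)[OF assms] w by simp
    also have "\<dots> \<le> ?S1" by (rule SUP_upper[OF w])
    finally show "ereal (Re (trace (\<rho> ** op_log \<omega>)) + 1 - Re (trace (\<sigma> ** \<omega>))) \<le> ?S1" .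
  qed
  have 3: "?D \<le> ?S2" by (rule step3[OF assms(1,2)])
  have e1: "?D = ?S1" using 1 2 3 by (rule_tac antisym) auto
  have e2: "?D = ?S2" using 1 2 3 by (rule_tac antisym) auto
  have sup: "\<not> op_support \<rho> \<subseteq> op_support \<sigma> \<longrightarrow> ?D = \<infinity>"
    using step4[OF assms(1,2)] by blast
  have att: "pd_op \<rho> \<and> pd_op \<sigma> \<longrightarrow>
           (\<exists>\<omega>. pd_op \<omega> \<and> ?D = ereal (Re (trace (\<rho> ** op_log \<omega>)) - ln (Re (trace (\<sigma> ** \<omega>)))))
         \<and> (\<exists>\<omega>. pd_op \<omega> \<and> ?D = ereal (Re (trace (\<rho> ** op_log \<omega>)) + 1 - Re (trace (\<sigma> ** \<omega>))))"
    using step5[OF assms(1)] by blast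
  show ?thesis using e1 e2 sup att by blast
qed

end
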